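(* Let $G$ be a finite connected graph and $r\in\mathbb{N}$. Then the group $\mathcal{D}_r$ of deck transformations of the $r$-local covering $p_r:G_r\to G$ is finitely presented.
   Context: Graphs may have loops and parallel edges and are viewed as 1-complexes; a cycle may be a loop or a pair of parallel edges. A closed walk once around a cycle $O$ is a closed walk in $O$ traversing every edge of $O$ exactly once. For a vertex $x_0$, $\pi_1^r(G,x_0)$ is the subgroup of $\pi_1(G,x_0)$ generated by the classes of all closed walks $W_0QW_0^-$, where $W_0$ is a walk from $x_0$ to a vertex $y$, $Q$ a closed walk at $y$ once around a cycle of length at most $r$, and $W_0^-$ the reverse of $W_0$; it is normal. The $r$-local covering $p_r:G_r\to G$ is the connected normal covering with characteristic subgroup $\pi_1^r(G,x_0)$; its deck group is $\mathcal{D}_r\cong\pi_1(G,x_0)/\pi_1^r(G,x_0)$. *)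

theory Defs
  imports "HOL-Algebra.Algebra"
begin

text \<open>Letters are pairs (a, b); (a, \<not> b) is the formal inverse of (a, b).
  For graphs, a letter is a dart: an edge together with a direction.\<close>

definition flip :: "'a \<times> bool \<Rightarrow> 'a \<times> bool" where
  "flip d = (fst d, \<not> snd d)"

definition inv_word :: "('a \<times> bool) list \<Rightarrow> ('a \<times> bool) list" where
  "inv_word w = rev (map flip w)"

definition red_step :: "(('a \<times> bool) list \<times> ('a \<times> bool) list) set" where
  "red_step = {(u @ [a, flip a] @ v, u @ v) | u a v. True}"

definition word_equiv :: "(('a \<times> bool) list \<times> ('a \<times> bool) list) set" where
  "word_equiv = (red_step \<union> red_step\<inverse>)\<^sup>*"

definition word_class :: "('a \<times> bool) list set \<Rightarrow> ('a \<times> bool) list \<Rightarrow> ('a \<times> bool) list set" where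
  "word_class W w = {w' \<in> W. (w, w') \<in> word_equiv}"

text \<open>Group of equivalence classes of the words in W (W closed under
  concatenation and inversion), multiplication induced by concatenation.\<close>
definition word_group :: "('a \<times> bool) list set \<Rightarrow> ('a \<times> bool) list set monoid" where
  "word_group W = \<lparr> carrier = word_class W ` W,
      monoid.mult = (\<lambda>A B. word_class W ((SOME u. u \<in> A) @ (SOME v. v \<in> B))),
      monoid.one = word_class W [] \<rparr>"

definition free_words :: "'a set \<Rightarrow> ('a \<times> bool) list set" where
  "free_words S = {w. set (map fst w) \<subseteq> S}"

definition free_group :: "'a set \<Rightarrow> ('a \<times> bool) list set monoid" where
  "free_group S = word_group (free_words S)"

definition normal_closure :: "('a, 'b) monoid_scheme \<Rightarrow> 'a set \<Rightarrow> 'a set" where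
  "normal_closure G A = generate G
     {g \<otimes>\<^bsub>G\<^esub> a \<otimes>\<^bsub>G\<^esub> inv\<^bsub>G\<^esub> g | g a. g \<in> carrier G \<and> a \<in> A}"

definition finitely_presented :: "('g, 'b) monoid_scheme \<Rightarrow> bool" where
  "finitely_presented G \<longleftrightarrow>
     (\<exists>(S :: nat set) R. finite S \<and> finite R \<and> R \<subseteq> free_words S \<and>
        G \<cong> (free_group S Mod
               normal_closure (free_group S) (word_class (free_words S) ` R)))"

text \<open>A graph is given by a vertex set V, an edge set E and two endpoint maps
  src, tgt (an arbitrary reference orientation of each edge).\<close>

definition dstart :: "('e \<Rightarrow> 'v) \<Rightarrow> ('e \<Rightarrow> 'v) \<Rightarrow> 'e \<times> bool \<Rightarrow> 'v" where
  "dstart src tgt d = (if snd d then src (fst d) else tgt (fst d))"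

definition dend :: "('e \<Rightarrow> 'v) \<Rightarrow> ('e \<Rightarrow> 'v) \<Rightarrow> 'e \<times> bool \<Rightarrow> 'v" where
  "dend src tgt d = (if snd d then tgt (fst d) else src (fst d))"

definition graph :: "'v set \<Rightarrow> 'e set \<Rightarrow> ('e \<Rightarrow> 'v) \<Rightarrow> ('e \<Rightarrow> 'v) \<Rightarrow> bool" where
  "graph V E src tgt \<longleftrightarrow> (\<forall>e\<in>E. src e \<in> V \<and> tgt e \<in> V)"

primrec walk :: "'v set \<Rightarrow> 'e set \<Rightarrow> ('e \<Rightarrow> 'v) \<Rightarrow> ('e \<Rightarrow> 'v) \<Rightarrow>
                 'v \<Rightarrow> ('e \<times> bool) list \<Rightarrow> 'v \<Rightarrow> bool" where
  "walk V E src tgt x [] y \<longleftrightarrow> x \<in> V \<and> x = y"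
| "walk V E src tgt x (d # ds) y \<longleftrightarrow> x \<in> V \<and> fst d \<in> E \<and> dstart src tgt d = x \<and>
       walk V E src tgt (dend src tgt d) ds y"

definition connected_graph :: "'v set \<Rightarrow> 'e set \<Rightarrow> ('e \<Rightarrow> 'v) \<Rightarrow> ('e \<Rightarrow> 'v) \<Rightarrow> bool" where
  "connected_graph V E src tgt \<longleftrightarrow> V \<noteq> {} \<and>
     (\<forall>x\<in>V. \<forall>y\<in>V. \<exists>w. walk V E src tgt x w y)"

text \<open>A closed walk at y once around a cycle: a nonempty closed walk using each
  of its edges once and passing through each of its vertices once.  (Loops are
  cycles of length 1, pairs of parallel edges cycles of length 2.)\<close>
definition once_around_cycle :: "'v set \<Rightarrow> 'e set \<Rightarrow> ('e \<Rightarrow> 'v) \<Rightarrow> ('e \<Rightarrow> 'v) \<Rightarrow>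
                 'v \<Rightarrow> ('e \<times> bool) list \<Rightarrow> bool" where
  "once_around_cycle V E src tgt y Q \<longleftrightarrow> walk V E src tgt y Q y \<and> Q \<noteq> [] \<and>
     distinct (map fst Q) \<and> distinct (map (dstart src tgt) Q)"

definition closed_walks :: "'v set \<Rightarrow> 'e set \<Rightarrow> ('e \<Rightarrow> 'v) \<Rightarrow> ('e \<Rightarrow> 'v) \<Rightarrow> 'v \<Rightarrow>
                 ('e \<times> bool) list set" where
  "closed_walks V E src tgt x0 = {w. walk V E src tgt x0 w x0}"

definition pi1 :: "'v set \<Rightarrow> 'e set \<Rightarrow> ('e \<Rightarrow> 'v) \<Rightarrow> ('e \<Rightarrow> 'v) \<Rightarrow> 'v \<Rightarrow>
                 ('e \<times> bool) list set monoid" where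
  "pi1 V E src tgt x0 = word_group (closed_walks V E src tgt x0)"

definition pi1_r :: "'v set \<Rightarrow> 'e set \<Rightarrow> ('e \<Rightarrow> 'v) \<Rightarrow> ('e \<Rightarrow> 'v) \<Rightarrow> nat \<Rightarrow> 'v \<Rightarrow>
                 ('e \<times> bool) list set set" where
  "pi1_r V E src tgt r x0 = generate (pi1 V E src tgt x0)
     {word_class (closed_walks V E src tgt x0) (W0 @ Q @ inv_word W0) | W0 Q y.
        walk V E src tgt x0 W0 y \<and> once_around_cycle V E src tgt y Q \<and> length Q \<le> r}"

text \<open>Deck group of the r-local covering: \<pi>_1(G,x0) / \<pi>_1^r(G,x0).\<close>
definition deck_group_r :: "'v set \<Rightarrow> 'e set \<Rightarrow> ('e \<Rightarrow> 'v) \<Rightarrow> ('e \<Rightarrow> 'v) \<Rightarrow> nat \<Rightarrow> 'v \<Rightarrow>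
                 ('e \<times> bool) list set set monoid" where
  "deck_group_r V E src tgt r x0 = pi1 V E src tgt x0 Mod pi1_r V E src tgt r x0"

end

theory Submission
  imports Defs "HOL-Algebra.Algebra"
begin


lemma flip_flip[simp]: "flip (flip a) = a" by (simp add: flip_def)
lemma inv_word_Nil[simp]: "inv_word [] = []" by (simp add: inv_word_def)
lemma inv_word_Cons: "inv_word (a # w) = inv_word w @ [flip a]" by (simp add: inv_word_def)
lemma inv_word_append[simp]: "inv_word (u @ v) = inv_word v @ inv_word u" by (simp add: inv_word_def)
lemma inv_word_inv_word[simp]: "inv_word (inv_word w) = w" by (simp add: inv_word_def rev_map comp_def)
lemma inv_word_single[simp]: "inv_word [a] = [flip a]" by (simp add: inv_word_def)
lemma fst_flip[simp]: "fst (flip a) = fst a" by (simp add: flip_def)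
lemma set_map_fst_inv_word[simp]: "set (map fst (inv_word w)) = set (map fst w)"
  by (simp add: inv_word_def image_image)

lemma red_step_ctx: "(u, v) \<in> red_step \<Longrightarrow> (x @ u @ y, x @ v @ y) \<in> red_step"
proof -
  assume "(u, v) \<in> red_step"
  then obtain u0 a v0 where "u = u0 @ [a, flip a] @ v0" "v = u0 @ v0" by (auto simp: red_step_def)
  then have "x @ u @ y = (x @ u0) @ [a, flip a] @ (v0 @ y)" "x @ v @ y = (x @ u0) @ (v0 @ y)" by simp_all
  then show ?thesis unfolding red_step_def by blast
qed

lemma we_refl[simp]: "(u, u) \<in> word_equiv" by (simp add: word_equiv_def)

lemma we_sym: "(u, v) \<in> word_equiv \<Longrightarrow> (v, u) \<in> word_equiv"
proof -
  assume "(u, v) \<in> word_equiv"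
  then have "(v, u) \<in> ((red_step \<union> red_step\<inverse>)\<inverse>)\<^sup>*"
    unfolding word_equiv_def by (simp add: rtrancl_converseI)
  moreover have "(red_step \<union> red_step\<inverse>)\<inverse> = red_step \<union> red_step\<inverse>" by auto
  ultimately show ?thesis unfolding word_equiv_def by metis
qed

lemma we_trans: "(u, v) \<in> word_equiv \<Longrightarrow> (v, w) \<in> word_equiv \<Longrightarrow> (u, w) \<in> word_equiv"
  unfolding word_equiv_def by (rule rtrancl_trans)

lemma we_red: "(u @ [a, flip a] @ v, u @ v) \<in> word_equiv"
  unfolding word_equiv_def red_step_def by (rule r_into_rtrancl) blast

lemma we_ctx: "(u, v) \<in> word_equiv \<Longrightarrow> (x @ u @ y, x @ v @ y) \<in> word_equiv"
  unfolding word_equiv_def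
proof (induction rule: rtrancl_induct)
  case base then show ?case by simp
next
  case (step v w)
  then have "(x @ v @ y, x @ w @ y) \<in> red_step \<union> red_step\<inverse>"
    using red_step_ctx by blast
  with step show ?case by (meson rtrancl.rtrancl_into_rtrancl)
qed

lemma we_app: "(u, u') \<in> word_equiv \<Longrightarrow> (v, v') \<in> word_equiv \<Longrightarrow> (u @ v, u' @ v') \<in> word_equiv"
  using we_ctx[of u u' "[]" v] we_ctx[of v v' u' "[]"] we_trans by auto

lemma we_cancel: "(w @ inv_word w, []) \<in> word_equiv"
proof (induction w)
  case Nil then show ?case by simp
next
  case (Cons a w)
  have "((a # w) @ inv_word (a # w), [a] @ (w @ inv_word w) @ [flip a]) \<in> word_equiv"
    by (simp add: inv_word_Cons)
  moreover have "([a] @ (w @ inv_word w) @ [flip a], [a] @ [] @ [flip a]) \<in> word_equiv"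
    using we_ctx[OF Cons.IH] .
  moreover have "([a] @ [] @ [flip a], []) \<in> word_equiv" using we_red[of "[]" a "[]"] by simp
  ultimately show ?case using we_trans by blast
qed

lemma we_cancel2: "(inv_word w @ w, []) \<in> word_equiv"
  using we_cancel[of "inv_word w"] by simp

lemma we_map:
  assumes "\<And>a. f (flip a) = flip (f a)" and "(u, v) \<in> word_equiv"
  shows "(map f u, map f v) \<in> word_equiv"
  using assms(2) unfolding word_equiv_def
proof (induction rule: rtrancl_induct)
  case base then show ?case by simp
next
  case (step v w)
  have r: "(map f x, map f y) \<in> red_step" if xy: "(x, y) \<in> red_step" for x y
  proof -
    obtain u0 a v0 where "x = u0 @ [a, flip a] @ v0" "y = u0 @ v0" using xy unfolding red_step_def by blast
    then have "map f x = map f u0 @ [f a, flip (f a)] @ map f v0" "map f y = map f u0 @ map f v0"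
      by (simp_all add: assms(1))
    then show ?thesis unfolding red_step_def by blast
  qed
  have "(map f v, map f w) \<in> red_step \<union> red_step\<inverse>"
    using step(2) r by blast
  with step show ?case by (meson rtrancl.rtrancl_into_rtrancl)
qed

locale wgrp = fixes W :: "('a \<times> bool) list set"
  assumes Nil_in: "[] \<in> W" and app_in: "u \<in> W \<Longrightarrow> v \<in> W \<Longrightarrow> u @ v \<in> W"
    and inv_in: "u \<in> W \<Longrightarrow> inv_word u \<in> W"
begin

abbreviation cl where "cl \<equiv> word_class W"

lemma cl_mem: "w \<in> W \<Longrightarrow> w \<in> cl w" by (simp add: word_class_def)

lemma cl_eq: "(u, v) \<in> word_equiv \<Longrightarrow> cl u = cl v"
  unfolding word_class_def using we_sym we_trans by blast

lemma cl_eq_iff: "v \<in> W \<Longrightarrow> cl u = cl v \<longleftrightarrow> (u, v) \<in> word_equiv"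
  using cl_eq cl_mem[of v] by (auto simp: word_class_def)

lemma some_cl: "u \<in> W \<Longrightarrow> ((SOME x. x \<in> cl u), u) \<in> word_equiv"
proof -
  assume u: "u \<in> W"
  then have "(SOME x. x \<in> cl u) \<in> cl u" using cl_mem by (metis someI)
  then show ?thesis by (auto simp: word_class_def intro: we_sym)
qed

lemma some_cl_in: "u \<in> W \<Longrightarrow> (SOME x. x \<in> cl u) \<in> W"
proof -
  assume u: "u \<in> W"
  then have "(SOME x. x \<in> cl u) \<in> cl u" using cl_mem by (metis someI)
  then show ?thesis by (auto simp: word_class_def)
qed

lemma carrier_wg: "carrier (word_group W) = cl ` W" by (simp add: word_group_def)
lemma one_wg: "\<one>\<^bsub>word_group W\<^esub> = cl []" by (simp add: word_group_def)

lemma mult_wg: "u \<in> W \<Longrightarrow> v \<in> W \<Longrightarrow> cl u \<otimes>\<^bsub>word_group W\<^esub> cl v = cl (u @ v)"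
proof -
  assume "u \<in> W" "v \<in> W"
  then have "((SOME x. x \<in> cl u) @ (SOME x. x \<in> cl v), u @ v) \<in> word_equiv"
    using some_cl we_app by blast
  then show ?thesis by (simp add: word_group_def cl_eq)
qed

lemma group_wg: "group (word_group W)"
proof (rule groupI)
  fix x y assume "x \<in> carrier (word_group W)" "y \<in> carrier (word_group W)"
  then show "x \<otimes>\<^bsub>word_group W\<^esub> y \<in> carrier (word_group W)"
    by (auto simp: carrier_wg mult_wg app_in)
next
  show "\<one>\<^bsub>word_group W\<^esub> \<in> carrier (word_group W)" by (simp add: carrier_wg one_wg Nil_in)
next
  fix x y z assume "x \<in> carrier (word_group W)" "y \<in> carrier (word_group W)" "z \<in> carrier (word_group W)"
  then show "x \<otimes>\<^bsub>word_group W\<^esub> y \<otimes>\<^bsub>word_group W\<^esub> z =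
             x \<otimes>\<^bsub>word_group W\<^esub> (y \<otimes>\<^bsub>word_group W\<^esub> z)"
    by (auto simp: carrier_wg mult_wg app_in)
next
  fix x assume "x \<in> carrier (word_group W)"
  then show "\<one>\<^bsub>word_group W\<^esub> \<otimes>\<^bsub>word_group W\<^esub> x = x"
    by (auto simp: carrier_wg mult_wg one_wg Nil_in)
next
  fix x assume "x \<in> carrier (word_group W)"
  then obtain u where u: "u \<in> W" "x = cl u" by (auto simp: carrier_wg)
  then have "cl (inv_word u) \<otimes>\<^bsub>word_group W\<^esub> x = \<one>\<^bsub>word_group W\<^esub>"
    by (simp add: mult_wg inv_in one_wg cl_eq we_cancel2)
  moreover have "cl (inv_word u) \<in> carrier (word_group W)" using u inv_in by (simp add: carrier_wg)
  ultimately show "\<exists>y\<in>carrier (word_group W). y \<otimes>\<^bsub>word_group W\<^esub> x = \<one>\<^bsub>word_group W\<^esub>" by blast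
qed

lemma inv_wg: "u \<in> W \<Longrightarrow> inv\<^bsub>word_group W\<^esub> (cl u) = cl (inv_word u)"
proof -
  assume u: "u \<in> W"
  interpret group "word_group W" by (rule group_wg)
  have "cl (inv_word u) \<otimes>\<^bsub>word_group W\<^esub> cl u = \<one>\<^bsub>word_group W\<^esub>"
    using u by (simp add: mult_wg inv_in one_wg cl_eq we_cancel2)
  then show ?thesis using u inv_in
    by (metis carrier_wg image_eqI inv_equality)
qed

end

lemma wg_hom:
  assumes W1: "wgrp W1" and W2: "wgrp W2"
    and f_in: "\<And>u. u \<in> W1 \<Longrightarrow> f u \<in> W2"
    and f_app: "\<And>u v. u \<in> W1 \<Longrightarrow> v \<in> W1 \<Longrightarrow> (f (u @ v), f u @ f v) \<in> word_equiv"
    and f_resp: "\<And>u v. u \<in> W1 \<Longrightarrow> v \<in> W1 \<Longrightarrow> (u, v) \<in> word_equiv \<Longrightarrow> (f u, f v) \<in> word_equiv"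
  shows "(\<lambda>Z. word_class W2 (f (SOME u. u \<in> Z))) \<in> hom (word_group W1) (word_group W2)"
    and "\<And>u. u \<in> W1 \<Longrightarrow> word_class W2 (f (SOME x. x \<in> word_class W1 u)) = word_class W2 (f u)"
proof -
  interpret A: wgrp W1 by (rule W1)
  interpret B: wgrp W2 by (rule W2)
  show ev: "\<And>u. u \<in> W1 \<Longrightarrow> word_class W2 (f (SOME x. x \<in> word_class W1 u)) = word_class W2 (f u)"
    using A.some_cl A.some_cl_in B.cl_eq f_resp by blast
  show "(\<lambda>Z. word_class W2 (f (SOME u. u \<in> Z))) \<in> hom (word_group W1) (word_group W2)"
  proof (rule homI)
    fix Z assume "Z \<in> carrier (word_group W1)"
    then show "word_class W2 (f (SOME u. u \<in> Z)) \<in> carrier (word_group W2)"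
      by (auto simp: A.carrier_wg B.carrier_wg intro!: f_in A.some_cl_in)
  next
    fix Z Y assume "Z \<in> carrier (word_group W1)" "Y \<in> carrier (word_group W1)"
    then obtain u v where uv: "u \<in> W1" "v \<in> W1" "Z = word_class W1 u" "Y = word_class W1 v"
      by (auto simp: A.carrier_wg)
    then show "word_class W2 (f (SOME u. u \<in> Z \<otimes>\<^bsub>word_group W1\<^esub> Y)) =
       word_class W2 (f (SOME u. u \<in> Z)) \<otimes>\<^bsub>word_group W2\<^esub> word_class W2 (f (SOME u. u \<in> Y))"
      using ev[of u] ev[of v] ev[of "u @ v"] A.app_in
      by (simp add: A.mult_wg B.mult_wg f_in B.cl_eq f_app)
  qed
qed



lemma dstart_flip[simp]: "dstart src tgt (flip d) = dend src tgt d"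
  by (simp add: dstart_def dend_def flip_def)
lemma dend_flip[simp]: "dend src tgt (flip d) = dstart src tgt d"
  by (simp add: dstart_def dend_def flip_def)

lemma walk_ends: "walk V E src tgt x w y \<Longrightarrow> x \<in> V \<and> y \<in> V"
proof (induction w arbitrary: x)
  case Nil then show ?case by auto
next
  case (Cons d w)
  then have "walk V E src tgt (dend src tgt d) w y" "x \<in> V" by simp_all
  then show ?case using Cons.IH by blast
qed

lemma walk_append: "walk V E src tgt x u y \<Longrightarrow> walk V E src tgt y v z \<Longrightarrow> walk V E src tgt x (u @ v) z"
  by (induction u arbitrary: x) auto

lemma walk_fst: "walk V E src tgt x w y \<Longrightarrow> set (map fst w) \<subseteq> E"
  by (induction w arbitrary: x) auto

lemma walk_inv: "walk V E src tgt x w y \<Longrightarrow> walk V E src tgt y (inv_word w) x"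
proof (induction w arbitrary: x)
  case Nil then show ?case by auto
next
  case (Cons d w)
  then have h: "x \<in> V" "fst d \<in> E" "dstart src tgt d = x" "walk V E src tgt (dend src tgt d) w y" by auto
  have "dend src tgt d \<in> V" using walk_ends[OF h(4)] by simp
  then have "walk V E src tgt (dend src tgt d) [flip d] x" using h by simp
  then have "walk V E src tgt y (inv_word w @ [flip d]) x" by (rule walk_append[OF Cons.IH[OF h(4)]])
  then show ?case by (simp add: inv_word_Cons)
qed

lemma we_concat_map:
  assumes "\<And>a. g (flip a) = inv_word (g a)" and "(u, v) \<in> word_equiv"
  shows "(concat (map g u), concat (map g v)) \<in> word_equiv"
  using assms(2) unfolding word_equiv_def
proof (induction rule: rtrancl_induct)
  case base then show ?case by simp
next
  case (step v w)
  have r: "(concat (map g x), concat (map g y)) \<in> word_equiv" if xy: "(x, y) \<in> red_step" for x y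
  proof -
    obtain u0 a v0 where "x = u0 @ [a, flip a] @ v0" "y = u0 @ v0" using xy unfolding red_step_def by blast
    then have "concat (map g x) = concat (map g u0) @ (g a @ inv_word (g a)) @ concat (map g v0)"
      "concat (map g y) = concat (map g u0) @ [] @ concat (map g v0)"
      by (simp_all add: assms(1))
    then show ?thesis using we_ctx[OF we_cancel] by simp
  qed
  have "(concat (map g v), concat (map g w)) \<in> word_equiv"
    using step(2) r we_sym by blast
  with step show ?case using we_trans unfolding word_equiv_def by blast
qed

lemma fst_set_inv_word[simp]: "fst ` set (inv_word w) = fst ` set w"
  using set_map_fst_inv_word[of w] by simp

lemma wgrp_free: "wgrp (free_words S)"
  by unfold_locales (auto simp: free_words_def)

lemma wgrp_closed: "x0 \<in> V \<Longrightarrow> wgrp (closed_walks V E src tgt x0)"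
  by unfold_locales (auto simp: closed_walks_def intro: walk_append walk_inv walk.simps(1)[THEN iffD2]
     dest: walk_ends)



locale gctx =
  fixes V :: "'v set" and E :: "'e set" and src tgt :: "'e \<Rightarrow> 'v" and r :: nat and x0 :: 'v
  assumes gr: "graph V E src tgt" and fV: "finite V" and fE: "finite E"
    and conn: "connected_graph V E src tgt" and x0V: "x0 \<in> V"
begin

abbreviation "Wc \<equiv> closed_walks V E src tgt x0"
abbreviation "Pg \<equiv> pi1 V E src tgt x0"
abbreviation "wlk \<equiv> walk V E src tgt"
abbreviation "ds \<equiv> dstart src tgt"
abbreviation "de \<equiv> dend src tgt"

lemma Pg_def: "Pg = word_group Wc" by (simp add: pi1_def)

lemma wgrpW: "wgrp Wc" using wgrp_closed[OF x0V] .

interpretation PW: wgrp Wc by (rule wgrpW)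

lemma grpP: "group Pg" unfolding Pg_def by (rule PW.group_wg)

lemma Wc_iff: "w \<in> Wc \<longleftrightarrow> wlk x0 w x0" by (simp add: closed_walks_def)

definition pw :: "'v \<Rightarrow> ('e \<times> bool) list" where
  "pw v = (if v = x0 then [] else SOME w. wlk x0 w v)"

lemma pw_x0[simp]: "pw x0 = []" by (simp add: pw_def)

lemma pw_walk: "v \<in> V \<Longrightarrow> wlk x0 (pw v) v"
proof (cases "v = x0")
  case True then show ?thesis using x0V by auto
next
  case False
  assume v: "v \<in> V"
  then have "\<exists>w. wlk x0 w v" using conn x0V unfolding connected_graph_def by blast
  then have "wlk x0 (SOME w. wlk x0 w v) v" by (rule someI_ex)
  then show ?thesis using False unfolding pw_def by simp
qed

lemma ds_V: "fst d \<in> E \<Longrightarrow> ds d \<in> V" using gr by (auto simp: graph_def dstart_def)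
lemma de_V: "fst d \<in> E \<Longrightarrow> de d \<in> V" using gr by (auto simp: graph_def dend_def)

definition th :: "'e \<times> bool \<Rightarrow> ('e \<times> bool) list" where
  "th d = pw (ds d) @ [d] @ inv_word (pw (de d))"

lemma th_flip: "th (flip d) = inv_word (th d)" by (simp add: th_def inv_word_Cons)

lemma walk_single: "fst d \<in> E \<Longrightarrow> wlk (ds d) [d] (de d)"
  using ds_V de_V by auto

lemma th_walk: "fst d \<in> E \<Longrightarrow> wlk x0 (th d) x0"
  unfolding th_def
  by (intro walk_append[OF pw_walk] walk_append[OF walk_single] walk_inv[OF pw_walk])
     (auto simp: ds_V de_V)

definition enc :: "'e \<Rightarrow> nat" where "enc = (SOME f. inj_on f E)"

lemma enc_inj: "inj_on enc E"
proof -
  have "\<exists>f::'e \<Rightarrow> nat. inj_on f E" using finite_imp_inj_to_nat_seg[OF fE] by blast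
  then show ?thesis unfolding enc_def by (rule someI_ex)
qed

definition S :: "nat set" where "S = enc ` E"
definition dec :: "nat \<Rightarrow> 'e" where "dec = the_inv_into E enc"

lemma dec_enc[simp]: "e \<in> E \<Longrightarrow> dec (enc e) = e"
  by (simp add: dec_def the_inv_into_f_f enc_inj)

lemma dec_in: "k \<in> S \<Longrightarrow> dec k \<in> E" by (auto simp: S_def)

lemma finite_S: "finite S" using fE by (simp add: S_def)

definition encl :: "'e \<times> bool \<Rightarrow> nat \<times> bool" where "encl a = (enc (fst a), snd a)"
definition decl :: "nat \<times> bool \<Rightarrow> 'e \<times> bool" where "decl a = (dec (fst a), snd a)"

lemma encl_flip: "encl (flip a) = flip (encl a)" by (simp add: encl_def flip_def)
lemma decl_flip: "decl (flip a) = flip (decl a)" by (simp add: decl_def flip_def)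
lemma decl_encl: "fst a \<in> E \<Longrightarrow> decl (encl a) = a" by (simp add: decl_def encl_def)

lemma inv_word_map_encl: "inv_word (map encl w) = map encl (inv_word w)"
  by (simp add: inv_word_def rev_map encl_flip)

definition thn :: "nat \<times> bool \<Rightarrow> ('e \<times> bool) list" where "thn a = th (decl a)"
definition Th :: "(nat \<times> bool) list \<Rightarrow> ('e \<times> bool) list" where "Th u = concat (map thn u)"

lemma thn_flip: "thn (flip a) = inv_word (thn a)" by (simp add: thn_def decl_flip th_flip)

lemma Th_simps[simp]: "Th [] = []" "Th (a # u) = thn a @ Th u" "Th (u @ v) = Th u @ Th v"
  by (simp_all add: Th_def)

abbreviation "FW \<equiv> free_words S"
abbreviation "Fg \<equiv> free_group S"

lemma Fg_def: "Fg = word_group FW" by (simp add: free_group_def)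

interpretation FF: wgrp FW by (rule wgrp_free)

lemma grpF: "group Fg" unfolding Fg_def by (rule FF.group_wg)

lemma FW_iff: "u \<in> FW \<longleftrightarrow> fst ` set u \<subseteq> S" by (simp add: free_words_def)

lemma thn_walk: "fst a \<in> S \<Longrightarrow> wlk x0 (thn a) x0"
  unfolding thn_def by (rule th_walk) (simp add: decl_def dec_in)

lemma Th_in: "u \<in> FW \<Longrightarrow> Th u \<in> Wc"
proof (induction u)
  case Nil then show ?case using x0V by (auto simp: Wc_iff)
next
  case (Cons a u)
  then have "fst a \<in> S" "u \<in> FW" by (auto simp: FW_iff)
  then have "wlk x0 (thn a @ Th u) x0"
    using walk_append[OF thn_walk[OF \<open>fst a \<in> S\<close>]] Cons.IH by (simp add: Wc_iff)
  then show ?case by (simp add: Wc_iff)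
qed

lemma Th_resp: "(u, v) \<in> word_equiv \<Longrightarrow> (Th u, Th v) \<in> word_equiv"
  unfolding Th_def using we_concat_map[of thn] thn_flip by blast

lemma encw_in: "wlk x w y \<Longrightarrow> map encl w \<in> FW"
  unfolding FW_iff using walk_fst[of V E src tgt x w y] by (force simp: S_def encl_def)

lemma Th_enc: "wlk x w y \<Longrightarrow> (Th (map encl w), pw x @ w @ inv_word (pw y)) \<in> word_equiv"
proof (induction w arbitrary: x)
  case Nil
  then have "x = y" by auto
  then show ?case using we_sym[OF we_cancel[of "pw x"]] by simp
next
  case (Cons d w)
  then have h: "fst d \<in> E" "ds d = x" "wlk (de d) w y" by auto
  have "Th (map encl (d # w)) = th d @ Th (map encl w)" by (simp add: thn_def decl_encl h(1))
  also have "(th d @ Th (map encl w), th d @ (pw (de d) @ w @ inv_word (pw y))) \<in> word_equiv"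
    using we_ctx[OF Cons.IH[OF h(3)], of "th d" "[]"] by simp
  moreover have "th d @ (pw (de d) @ w @ inv_word (pw y)) =
     (pw x @ [d]) @ (inv_word (pw (de d)) @ pw (de d)) @ (w @ inv_word (pw y))"
    by (simp add: th_def h(2))
  moreover have "((pw x @ [d]) @ (inv_word (pw (de d)) @ pw (de d)) @ (w @ inv_word (pw y)),
      (pw x @ [d]) @ [] @ (w @ inv_word (pw y))) \<in> word_equiv"
    by (rule we_ctx[OF we_cancel2])
  ultimately show ?case using we_trans by fastforce
qed

lemma Th_enc_closed: "w \<in> Wc \<Longrightarrow> (Th (map encl w), w) \<in> word_equiv"
  using Th_enc[of x0 w x0] by (simp add: Wc_iff)

end



context gctx begin

interpretation PW: wgrp Wc by (rule wgrpW)
interpretation FF: wgrp FW by (rule wgrp_free)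

definition phi1 where "phi1 = (\<lambda>Z. word_class Wc (Th (SOME u. u \<in> Z)))"

lemma phi1_hom: "phi1 \<in> hom Fg Pg"
  unfolding phi1_def Pg_def Fg_def
  by (rule wg_hom(1)[OF wgrp_free wgrpW Th_in _ Th_resp]) simp_all

lemma phi1_cl: "u \<in> FW \<Longrightarrow> phi1 (word_class FW u) = word_class Wc (Th u)"
  unfolding phi1_def
  by (rule wg_hom(2)[OF wgrp_free wgrpW Th_in _ Th_resp]) simp_all

lemma encw_in_Wc: "u \<in> Wc \<Longrightarrow> map encl u \<in> FW"
  by (auto simp: Wc_iff intro: encw_in)

definition iota where "iota = (\<lambda>Z. word_class FW (map encl (SOME u. u \<in> Z)))"

lemma iota_resp: "(u, v) \<in> word_equiv \<Longrightarrow> (map encl u, map encl v) \<in> word_equiv"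
  using we_map[of encl] encl_flip by blast

lemma iota_hom: "iota \<in> hom Pg Fg"
  unfolding iota_def Pg_def Fg_def
  by (rule wg_hom(1)[OF wgrpW wgrp_free encw_in_Wc _ iota_resp]) simp_all

lemma iota_cl: "u \<in> Wc \<Longrightarrow> iota (word_class Wc u) = word_class FW (map encl u)"
  unfolding iota_def
  by (rule wg_hom(2)[OF wgrpW wgrp_free encw_in_Wc _ iota_resp]) simp_all

definition gens where
  "gens = {word_class Wc (W0 @ Q @ inv_word W0) | W0 Q y.
        wlk x0 W0 y \<and> once_around_cycle V E src tgt y Q \<and> length Q \<le> r}"

abbreviation "Pr \<equiv> pi1_r V E src tgt r x0"

lemma Pr_def: "Pr = generate Pg gens" by (simp add: pi1_r_def gens_def)

lemma gen_walk: "wlk x0 W0 y \<Longrightarrow> once_around_cycle V E src tgt y Q \<Longrightarrow> W0 @ Q @ inv_word W0 \<in> Wc"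
  unfolding Wc_iff once_around_cycle_def
  by (blast intro: walk_append walk_inv)

lemma gens_sub: "gens \<subseteq> carrier Pg"
  unfolding gens_def Pg_def PW.carrier_wg using gen_walk by blast

lemma Pr_normal: "Pr \<lhd> Pg"
proof -
  interpret group Pg by (rule grpP)
  show ?thesis unfolding Pr_def
  proof (rule normal_generateI[OF gens_sub])
    fix h g assume h: "h \<in> gens" and g: "g \<in> carrier Pg"
    then obtain W0 Q y where hq: "h = word_class Wc (W0 @ Q @ inv_word W0)" "wlk x0 W0 y"
      "once_around_cycle V E src tgt y Q" "length Q \<le> r" unfolding gens_def by blast
    from g obtain w where w: "w \<in> Wc" "g = word_class Wc w" unfolding Pg_def PW.carrier_wg by blast
    have in1: "W0 @ Q @ inv_word W0 \<in> Wc" using gen_walk hq by blast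
    have "g \<otimes>\<^bsub>Pg\<^esub> h \<otimes>\<^bsub>Pg\<^esub> inv\<^bsub>Pg\<^esub> g =
       word_class Wc ((w @ W0) @ Q @ inv_word (w @ W0))"
      unfolding Pg_def hq w using w(1) in1
      by (simp add: PW.inv_wg PW.mult_wg PW.app_in PW.inv_in)
    moreover have "wlk x0 (w @ W0) y" using w(1) hq(2) walk_append by (auto simp: Wc_iff)
    ultimately show "g \<otimes>\<^bsub>Pg\<^esub> h \<otimes>\<^bsub>Pg\<^esub> inv\<^bsub>Pg\<^esub> g \<in> gens"
      unfolding gens_def using hq by blast
  qed
qed

abbreviation "Dg \<equiv> Pg Mod Pr"

lemma deck_eq: "deck_group_r V E src tgt r x0 = Dg" by (simp add: deck_group_r_def)

lemma grpD: "group Dg" using Pr_normal by (rule normal.factorgroup_is_group)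

definition phi where "phi = (\<lambda>a. Pr #>\<^bsub>Pg\<^esub> a) \<circ> phi1"

lemma phi_hom: "phi \<in> hom Fg Dg"
  unfolding phi_def by (rule hom_compose[OF phi1_hom normal.r_coset_hom_Mod[OF Pr_normal]])

lemma phi_cl: "u \<in> FW \<Longrightarrow> phi (word_class FW u) = Pr #>\<^bsub>Pg\<^esub> word_class Wc (Th u)"
  by (simp add: phi_def phi1_cl)

lemma phi_surj: "phi ` carrier Fg = carrier Dg"
proof
  show "phi ` carrier Fg \<subseteq> carrier Dg" using phi_hom by (auto simp: hom_def)
next
  show "carrier Dg \<subseteq> phi ` carrier Fg"
  proof
    fix Z assume "Z \<in> carrier Dg"
    then obtain x where x: "x \<in> carrier Pg" "Z = Pr #>\<^bsub>Pg\<^esub> x"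
      by (auto simp: carrier_FactGroup)
    then obtain w where w: "w \<in> Wc" "x = word_class Wc w" unfolding Pg_def PW.carrier_wg by blast
    have "word_class Wc (Th (map encl w)) = word_class Wc w"
      using PW.cl_eq Th_enc_closed[OF w(1)] by blast
    then have "Z = phi (word_class FW (map encl w))"
      using phi_cl[OF encw_in_Wc[OF w(1)]] x w by simp
    moreover have "word_class FW (map encl w) \<in> carrier Fg"
      unfolding Fg_def FF.carrier_wg using encw_in_Wc[OF w(1)] by blast
    ultimately show "Z \<in> phi ` carrier Fg" by blast
  qed
qed

end


context gctx begin

interpretation PW: wgrp Wc by (rule wgrpW)
interpretation FF: wgrp FW by (rule wgrp_free)

definition R1 where "R1 = {map encl (thn a) @ [flip a] | a. fst a \<in> S}"
definition R2 where "R2 = {map encl (pw y @ Q @ inv_word (pw y)) | y Q.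
    y \<in> V \<and> once_around_cycle V E src tgt y Q \<and> length Q \<le> r}"
definition RR where "RR = R1 \<union> R2"

lemma finite_RR: "finite RR"
proof -
  have "R1 \<subseteq> (\<lambda>a. map encl (thn a) @ [flip a]) ` (S \<times> (UNIV :: bool set))"
  proof
    fix x assume "x \<in> R1"
    then obtain a where a: "x = map encl (thn a) @ [flip a]" "fst a \<in> S" unfolding R1_def by blast
    have "a \<in> S \<times> (UNIV :: bool set)" using a(2) by (simp add: mem_Times_iff)
    then show "x \<in> (\<lambda>a. map encl (thn a) @ [flip a]) ` (S \<times> (UNIV :: bool set))"
      using a(1) by (rule rev_image_eqI)
  qed
  moreover have "finite ((\<lambda>a. map encl (thn a) @ [flip a]) ` (S \<times> (UNIV :: bool set)))"
    using finite_S by simp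
  ultimately have f1: "finite R1" by (rule finite_subset)
  let ?A = "V \<times> {xs. set xs \<subseteq> E \<times> (UNIV :: bool set) \<and> length xs \<le> r}"
  have "finite ?A" using fV fE by (intro finite_cartesian_product finite_lists_length_le) simp_all
  moreover have "R2 \<subseteq> (\<lambda>(y, Q). map encl (pw y @ Q @ inv_word (pw y))) ` ?A"
  proof
    fix x assume "x \<in> R2"
    then obtain y Q where yq: "x = map encl (pw y @ Q @ inv_word (pw y))" "y \<in> V"
      "once_around_cycle V E src tgt y Q" "length Q \<le> r" unfolding R2_def by blast
    then have "wlk y Q y" unfolding once_around_cycle_def by blast
    then have "set (map fst Q) \<subseteq> E" by (rule walk_fst)
    then have "set Q \<subseteq> E \<times> (UNIV :: bool set)" by (auto simp: mem_Times_iff)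
    then have "(y, Q) \<in> ?A" using yq by simp
    then show "x \<in> (\<lambda>(y, Q). map encl (pw y @ Q @ inv_word (pw y))) ` ?A"
      by (rule rev_image_eqI) (simp add: yq(1))
  qed
  ultimately have "finite R2" by (meson finite_subset finite_imageI)
  then show ?thesis using f1 by (simp add: RR_def)
qed

lemma R1_walk: "fst a \<in> S \<Longrightarrow> map encl (thn a) \<in> FW"
  using encw_in[OF thn_walk] .

lemma R2_walk: "y \<in> V \<Longrightarrow> once_around_cycle V E src tgt y Q \<Longrightarrow> pw y @ Q @ inv_word (pw y) \<in> Wc"
  using gen_walk[OF pw_walk] .

lemma RR_sub: "RR \<subseteq> FW"
proof
  fix x assume "x \<in> RR"
  then show "x \<in> FW"
  proof (unfold RR_def, elim UnE)
    assume "x \<in> R1"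
    then obtain a where a: "x = map encl (thn a) @ [flip a]" "fst a \<in> S" unfolding R1_def by blast
    then show ?thesis using R1_walk[OF a(2)] by (auto simp: FW_iff)
  next
    assume "x \<in> R2"
    then obtain y Q where "x = map encl (pw y @ Q @ inv_word (pw y))" "y \<in> V"
      "once_around_cycle V E src tgt y Q" unfolding R2_def by blast
    then show ?thesis using encw_in_Wc R2_walk by blast
  qed
qed

definition NN where "NN = normal_closure Fg (word_class FW ` RR)"

definition conjs where "conjs = {g \<otimes>\<^bsub>Fg\<^esub> a \<otimes>\<^bsub>Fg\<^esub> inv\<^bsub>Fg\<^esub> g | g a. g \<in> carrier Fg \<and> a \<in> word_class FW ` RR}"

lemma NN_def2: "NN = generate Fg conjs" by (simp add: NN_def normal_closure_def conjs_def)

lemma clR_sub: "word_class FW ` RR \<subseteq> carrier Fg"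
  using RR_sub unfolding Fg_def FF.carrier_wg by blast

lemma conjs_sub: "conjs \<subseteq> carrier Fg"
proof -
  interpret group Fg by (rule grpF)
  show ?thesis unfolding conjs_def using clR_sub by blast
qed

lemma R_conjs: "word_class FW ` RR \<subseteq> conjs"
proof -
  interpret group Fg by (rule grpF)
  show ?thesis unfolding conjs_def
  proof
    fix a assume "a \<in> word_class FW ` RR"
    then have "a = \<one>\<^bsub>Fg\<^esub> \<otimes>\<^bsub>Fg\<^esub> a \<otimes>\<^bsub>Fg\<^esub> inv\<^bsub>Fg\<^esub> \<one>\<^bsub>Fg\<^esub>" using clR_sub by auto
    then show "a \<in> {g \<otimes>\<^bsub>Fg\<^esub> a \<otimes>\<^bsub>Fg\<^esub> inv\<^bsub>Fg\<^esub> g | g a. g \<in> carrier Fg \<and> a \<in> word_class FW ` RR}"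
      using \<open>a \<in> word_class FW ` RR\<close> by blast
  qed
qed

lemma NN_normal: "NN \<lhd> Fg"
proof -
  interpret group Fg by (rule grpF)
  show ?thesis unfolding NN_def2
  proof (rule normal_generateI[OF conjs_sub])
    fix h g assume h: "h \<in> conjs" and g: "g \<in> carrier Fg"
    then obtain g' a where ga: "h = g' \<otimes>\<^bsub>Fg\<^esub> a \<otimes>\<^bsub>Fg\<^esub> inv\<^bsub>Fg\<^esub> g'" "g' \<in> carrier Fg" "a \<in> word_class FW ` RR"
      unfolding conjs_def by blast
    have a: "a \<in> carrier Fg" using ga(3) clR_sub by blast
    have "g \<otimes>\<^bsub>Fg\<^esub> h \<otimes>\<^bsub>Fg\<^esub> inv\<^bsub>Fg\<^esub> g = (g \<otimes>\<^bsub>Fg\<^esub> g') \<otimes>\<^bsub>Fg\<^esub> a \<otimes>\<^bsub>Fg\<^esub> inv\<^bsub>Fg\<^esub> (g \<otimes>\<^bsub>Fg\<^esub> g')"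
      using g ga(2) a unfolding ga(1) by (simp add: m_assoc inv_mult_group)
    moreover have "g \<otimes>\<^bsub>Fg\<^esub> g' \<in> carrier Fg" using g ga(2) by simp
    ultimately show "g \<otimes>\<^bsub>Fg\<^esub> h \<otimes>\<^bsub>Fg\<^esub> inv\<^bsub>Fg\<^esub> g \<in> conjs" unfolding conjs_def using ga(3) by blast
  qed
qed

lemma NN_sub: "subgroup NN Fg" using NN_normal by (rule normal_imp_subgroup)

end


context gctx begin

interpretation PW: wgrp Wc by (rule wgrpW)
interpretation FF: wgrp FW by (rule wgrp_free)

lemma ghom: "group_hom Fg Dg phi"
  unfolding group_hom_def group_hom_axioms_def using grpF grpD phi_hom by blast

lemma ghom_iota: "group_hom Pg Fg iota"
  unfolding group_hom_def group_hom_axioms_def using grpF grpP iota_hom by blast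

lemma Pr_sub: "subgroup Pr Pg" using Pr_normal by (rule normal_imp_subgroup)

lemma Th_carrier: "u \<in> FW \<Longrightarrow> word_class Wc (Th u) \<in> carrier Pg"
  unfolding Pg_def PW.carrier_wg using Th_in by blast

lemma kernel_cl: "u \<in> FW \<Longrightarrow> word_class FW u \<in> kernel Fg Dg phi \<longleftrightarrow> word_class Wc (Th u) \<in> Pr"
proof -
  assume u: "u \<in> FW"
  have c: "word_class FW u \<in> carrier Fg" unfolding Fg_def FF.carrier_wg using u by blast
  have "word_class FW u \<in> kernel Fg Dg phi \<longleftrightarrow> Pr #>\<^bsub>Pg\<^esub> word_class Wc (Th u) = Pr"
    using c by (simp add: kernel_def phi_cl[OF u])
  also have "\<dots> \<longleftrightarrow> word_class Wc (Th u) \<in> Pr"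
    using group.coset_join1[OF grpP _ Th_carrier[OF u] Pr_sub]
      group.coset_join2[OF grpP Th_carrier[OF u] Pr_sub] by blast
  finally show ?thesis .
qed

lemma one_Pr: "\<one>\<^bsub>Pg\<^esub> \<in> Pr" unfolding Pr_def by (rule generate.one)

lemma RR_ker: "\<rho> \<in> RR \<Longrightarrow> word_class FW \<rho> \<in> kernel Fg Dg phi"
proof -
  assume rho: "\<rho> \<in> RR"
  then have rF: "\<rho> \<in> FW" using RR_sub by blast
  show ?thesis unfolding kernel_cl[OF rF]
  proof (cases "\<rho> \<in> R1")
    case True
    then obtain a where a: "\<rho> = map encl (thn a) @ [flip a]" "fst a \<in> S" unfolding R1_def by blast
    have tw: "thn a \<in> Wc" using thn_walk[OF a(2)] by (simp add: Wc_iff)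
    have "Th \<rho> = Th (map encl (thn a)) @ inv_word (thn a)" by (simp add: a(1) thn_flip)
    moreover have "(Th (map encl (thn a)) @ inv_word (thn a), thn a @ inv_word (thn a)) \<in> word_equiv"
      using we_ctx[OF Th_enc_closed[OF tw], of "[]" "inv_word (thn a)"] by simp
    ultimately have "(Th \<rho>, []) \<in> word_equiv" using we_cancel we_trans by metis
    then have "word_class Wc (Th \<rho>) = \<one>\<^bsub>Pg\<^esub>" unfolding Pg_def PW.one_wg by (rule PW.cl_eq)
    then show "word_class Wc (Th \<rho>) \<in> Pr" using one_Pr by simp
  next
    case False
    then have "\<rho> \<in> R2" using rho by (simp add: RR_def)
    then obtain y Q where yq: "\<rho> = map encl (pw y @ Q @ inv_word (pw y))" "y \<in> V"
      "once_around_cycle V E src tgt y Q" "length Q \<le> r" unfolding R2_def by blast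
    have cw: "pw y @ Q @ inv_word (pw y) \<in> Wc" using R2_walk yq by blast
    have "word_class Wc (Th \<rho>) = word_class Wc (pw y @ Q @ inv_word (pw y))"
      unfolding yq(1) using PW.cl_eq[OF Th_enc_closed[OF cw]] .
    moreover have "word_class Wc (pw y @ Q @ inv_word (pw y)) \<in> gens"
      unfolding gens_def using pw_walk[OF yq(2)] yq(3,4) by blast
    ultimately show "word_class Wc (Th \<rho>) \<in> Pr" unfolding Pr_def by (simp add: generate.incl)
  qed
qed

lemma NN_ker: "NN \<subseteq> kernel Fg Dg phi"
proof -
  have nk: "kernel Fg Dg phi \<lhd> Fg" using ghom by (rule group_hom.normal_kernel)
  have "conjs \<subseteq> kernel Fg Dg phi"
  proof
    fix z assume "z \<in> conjs"
    then obtain g a where ga: "z = g \<otimes>\<^bsub>Fg\<^esub> a \<otimes>\<^bsub>Fg\<^esub> inv\<^bsub>Fg\<^esub> g" "g \<in> carrier Fg" "a \<in> word_class FW ` RR"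
      unfolding conjs_def by blast
    have "a \<in> kernel Fg Dg phi" using ga(3) RR_ker by blast
    then show "z \<in> kernel Fg Dg phi" using nk ga(1,2) unfolding group.normal_inv_iff[OF grpF] by blast
  qed
  then show ?thesis unfolding NN_def2
    by (rule group.generate_subgroup_incl[OF grpF _ group_hom.subgroup_kernel[OF ghom]])
qed

lemma iota_gens: "iota ` gens \<subseteq> NN"
proof
  fix z assume "z \<in> iota ` gens"
  then obtain W0 Q y where z: "z = iota (word_class Wc (W0 @ Q @ inv_word W0))" "wlk x0 W0 y"
      "once_around_cycle V E src tgt y Q" "length Q \<le> r" unfolding gens_def by blast
  have yV: "y \<in> V" using walk_ends[OF z(2)] by blast
  have gw: "W0 @ Q @ inv_word W0 \<in> Wc" using gen_walk z(2,3) by blast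
  have hw: "W0 @ inv_word (pw y) \<in> Wc" using walk_append[OF z(2) walk_inv[OF pw_walk[OF yV]]]
    by (simp add: Wc_iff)
  have cw: "pw y @ Q @ inv_word (pw y) \<in> Wc" using R2_walk yV z(3) by blast
  define g where "g = word_class FW (map encl (W0 @ inv_word (pw y)))"
  define a where "a = word_class FW (map encl (pw y @ Q @ inv_word (pw y)))"
  have gF: "g \<in> carrier Fg" unfolding g_def Fg_def FF.carrier_wg using encw_in_Wc[OF hw] by blast
  have aR: "a \<in> word_class FW ` RR" unfolding a_def RR_def R2_def using yV z(3,4) by blast
  have "g \<otimes>\<^bsub>Fg\<^esub> a \<otimes>\<^bsub>Fg\<^esub> inv\<^bsub>Fg\<^esub> g \<in> conjs" unfolding conjs_def using gF aR by blast
  then have in_NN: "g \<otimes>\<^bsub>Fg\<^esub> a \<otimes>\<^bsub>Fg\<^esub> inv\<^bsub>Fg\<^esub> g \<in> NN" unfolding NN_def2 by (rule generate.incl)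
  have i1: "map encl (W0 @ inv_word (pw y)) \<in> FW" using encw_in_Wc[OF hw] .
  have i2: "map encl (pw y @ Q @ inv_word (pw y)) \<in> FW" using encw_in_Wc[OF cw] .
  have i3: "map encl (inv_word (W0 @ inv_word (pw y))) \<in> FW"
    using FF.inv_in[OF i1] by (simp only: inv_word_map_encl)
  have e1: "g \<otimes>\<^bsub>Fg\<^esub> a = word_class FW (map encl (W0 @ inv_word (pw y)) @ map encl (pw y @ Q @ inv_word (pw y)))"
    unfolding g_def a_def Fg_def by (rule FF.mult_wg[OF i1 i2])
  have e2: "inv\<^bsub>Fg\<^esub> g = word_class FW (map encl (inv_word (W0 @ inv_word (pw y))))"
    unfolding g_def Fg_def FF.inv_wg[OF i1] inv_word_map_encl ..
  have e3: "word_class FW (map encl (W0 @ inv_word (pw y)) @ map encl (pw y @ Q @ inv_word (pw y)))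
     \<otimes>\<^bsub>Fg\<^esub> word_class FW (map encl (inv_word (W0 @ inv_word (pw y)))) =
     word_class FW ((map encl (W0 @ inv_word (pw y)) @ map encl (pw y @ Q @ inv_word (pw y)))
        @ map encl (inv_word (W0 @ inv_word (pw y))))"
    unfolding Fg_def by (rule FF.mult_wg[OF FF.app_in[OF i1 i2] i3])
  have "g \<otimes>\<^bsub>Fg\<^esub> a \<otimes>\<^bsub>Fg\<^esub> inv\<^bsub>Fg\<^esub> g =
     word_class FW (map encl (W0 @ (inv_word (pw y) @ pw y) @ Q @ (inv_word (pw y) @ pw y) @ inv_word W0))"
    unfolding e1 e2 e3 by simp
  also have "\<dots> = word_class FW (map encl (W0 @ [] @ Q @ [] @ inv_word W0))"
  proof (rule FF.cl_eq, rule iota_resp)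
    have "(W0 @ (inv_word (pw y) @ pw y) @ (Q @ (inv_word (pw y) @ pw y) @ inv_word W0),
           W0 @ [] @ (Q @ (inv_word (pw y) @ pw y) @ inv_word W0)) \<in> word_equiv"
      by (rule we_ctx[OF we_cancel2])
    moreover have "((W0 @ Q) @ (inv_word (pw y) @ pw y) @ inv_word W0,
           (W0 @ Q) @ [] @ inv_word W0) \<in> word_equiv"
      by (rule we_ctx[OF we_cancel2])
    ultimately show "(W0 @ (inv_word (pw y) @ pw y) @ Q @ (inv_word (pw y) @ pw y) @ inv_word W0,
        W0 @ [] @ Q @ [] @ inv_word W0) \<in> word_equiv"
      using we_trans by fastforce
  qed
  also have "\<dots> = z" using z(1) iota_cl[OF gw] by simp
  finally show "z \<in> NN" using in_NN by simp
qed

lemma iota_Pr: "iota ` Pr \<subseteq> NN"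
proof -
  have "iota ` Pr = generate Fg (iota ` gens)"
    unfolding Pr_def using group_hom.generate_img[OF ghom_iota gens_sub] by simp
  also have "\<dots> \<subseteq> NN"
    by (rule group.generate_subgroup_incl[OF grpF iota_gens NN_sub])
  finally show ?thesis .
qed

lemma coset_Th: "u \<in> FW \<Longrightarrow> NN #>\<^bsub>Fg\<^esub> word_class FW u = NN #>\<^bsub>Fg\<^esub> word_class FW (map encl (Th u))"
proof (induction u)
  case Nil then show ?case by simp
next
  case (Cons a u)
  then have aS: "fst a \<in> S" and uF: "u \<in> FW" by (auto simp: FW_iff)
  have a1: "[a] \<in> FW" "[flip a] \<in> FW" using aS by (auto simp: FW_iff)
  have xF: "map encl (thn a) \<in> FW" using R1_walk[OF aS] .
  have tF: "map encl (Th u) \<in> FW" using encw_in_Wc[OF Th_in[OF uF]] .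
  define Xa where "Xa = word_class FW (map encl (thn a))"
  define Ya where "Ya = word_class FW [a]"
  have XaF: "Xa \<in> carrier Fg" unfolding Xa_def Fg_def FF.carrier_wg using xF by blast
  have YaF: "Ya \<in> carrier Fg" unfolding Ya_def Fg_def FF.carrier_wg using a1 by blast
  have "Xa \<otimes>\<^bsub>Fg\<^esub> inv\<^bsub>Fg\<^esub> Ya = word_class FW (map encl (thn a) @ [flip a])"
    unfolding Xa_def Ya_def Fg_def using a1 xF by (simp add: FF.inv_wg FF.mult_wg)
  moreover have "map encl (thn a) @ [flip a] \<in> RR" unfolding RR_def R1_def using aS by blast
  ultimately have "Xa \<otimes>\<^bsub>Fg\<^esub> inv\<^bsub>Fg\<^esub> Ya \<in> NN"
    using R_conjs unfolding NN_def2 by (auto intro: generate.incl)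
  then have "Xa \<in> NN #>\<^bsub>Fg\<^esub> Ya" using subgroup.rcos_module[OF NN_sub grpF YaF XaF] by blast
  then have XaYa: "NN #>\<^bsub>Fg\<^esub> Ya = NN #>\<^bsub>Fg\<^esub> Xa"
    using group.repr_independence[OF grpF _ YaF NN_sub] by blast
  have uC: "word_class FW u \<in> carrier Fg" unfolding Fg_def FF.carrier_wg using uF by blast
  have tC: "word_class FW (map encl (Th u)) \<in> carrier Fg" unfolding Fg_def FF.carrier_wg using tF by blast
  have "word_class FW (a # u) = Ya \<otimes>\<^bsub>Fg\<^esub> word_class FW u"
    unfolding Ya_def Fg_def using a1 uF by (simp add: FF.mult_wg)
  then have "NN #>\<^bsub>Fg\<^esub> word_class FW (a # u) = (NN #>\<^bsub>Fg\<^esub> Ya) <#>\<^bsub>Fg\<^esub> (NN #>\<^bsub>Fg\<^esub> word_class FW u)"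
    using normal.rcos_sum[OF NN_normal YaF uC] by simp
  also have "\<dots> = (NN #>\<^bsub>Fg\<^esub> Xa) <#>\<^bsub>Fg\<^esub> (NN #>\<^bsub>Fg\<^esub> word_class FW (map encl (Th u)))"
    using XaYa Cons.IH[OF uF] by simp
  also have "\<dots> = NN #>\<^bsub>Fg\<^esub> (Xa \<otimes>\<^bsub>Fg\<^esub> word_class FW (map encl (Th u)))"
    using normal.rcos_sum[OF NN_normal XaF tC] .
  also have "Xa \<otimes>\<^bsub>Fg\<^esub> word_class FW (map encl (Th u)) = word_class FW (map encl (Th (a # u)))"
    unfolding Xa_def Fg_def using xF tF by (simp add: FF.mult_wg)
  finally show ?case .
qed

lemma ker_NN: "kernel Fg Dg phi \<subseteq> NN"
proof
  fix x assume x: "x \<in> kernel Fg Dg phi"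
  then have "x \<in> carrier Fg" by (simp add: kernel_def)
  then obtain u where u: "u \<in> FW" "x = word_class FW u" unfolding Fg_def FF.carrier_wg by blast
  then have "word_class Wc (Th u) \<in> Pr" using x kernel_cl by blast
  then have "iota (word_class Wc (Th u)) \<in> NN" using iota_Pr by blast
  then have inN: "word_class FW (map encl (Th u)) \<in> NN" using iota_cl[OF Th_in[OF u(1)]] by simp
  have tC: "word_class FW (map encl (Th u)) \<in> carrier Fg"
    unfolding Fg_def FF.carrier_wg using encw_in_Wc[OF Th_in[OF u(1)]] by blast
  have "NN #>\<^bsub>Fg\<^esub> x = NN"
    using coset_Th[OF u(1)] group.coset_join2[OF grpF tC NN_sub inN] u(2) by simp
  then show "x \<in> NN" using group.coset_join1[OF grpF _ \<open>x \<in> carrier Fg\<close> NN_sub] by blast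
qed

lemma ker_eq: "kernel Fg Dg phi = NN" using NN_ker ker_NN by blast

lemma main: "finitely_presented Dg"
proof -
  have "Fg Mod kernel Fg Dg phi \<cong> Dg" using group_hom.FactGroup_iso[OF ghom phi_surj] .
  then have "Fg Mod NN \<cong> Dg" by (simp add: ker_eq)
  then have "Dg \<cong> Fg Mod NN"
    using group.iso_sym[OF normal.factorgroup_is_group[OF NN_normal]] by blast
  then show ?thesis unfolding finitely_presented_def NN_def
    using finite_S finite_RR RR_sub by blast
qed

end

theorem proposition4p8:
  fixes V :: "'v set" and E :: "'e set" and src tgt :: "'e \<Rightarrow> 'v"
    and r :: nat and x0 :: 'v
  assumes "graph V E src tgt"
    and "finite V" and "finite E"
    and "connected_graph V E src tgt"
    and "x0 \<in> V"
  shows "finitely_presented (deck_group_r V E src tgt r x0)"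
proof -
  interpret gctx V E src tgt r x0 using assms by unfold_locales
  show ?thesis using main deck_eq by simp
qed


end
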